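(* For every $n\in\mathbb{N}$ and $t\in\mathbb{C}$, \[ t^n=\sum_{k=0}^nS_D[n,k]\,(t)^{D}_{k,q}+n(t-1)^{n-1}-[n]_q\,q^{n-1}(t)^{D}_{n-1,q}. \]
   Context: $[k]_q=1+\dots+q^{k-1}$, $[0]_q=0$. For fixed $n$, the $q$-falling factorial of type D is $(t)^D_{0,q}=1$, $(t)^D_{k,q}=(t-[1]_q)(t-[3]_q)\cdots(t-[2k-1]_q)$ for $1\le k<n$, and $(t)^D_{n,q}=(t-[1]_q)(t-[3]_q)\cdots(t-[2n-3]_q)(t-[n-1]_q)$. For $S\subset\mathbb{Z}\setminus\{0\}$, $\overline{S}=\{-i:i\in S\}$, a standard signed partition (SSP) of $S$ with $k$ blocks is a sequence $(S_1,\dots,S_k)$ of disjoint nonempty subsets of $S\cup\overline{S}$ with $\{S_1,\dots,S_k,\overline{S_1},\dots,\overline{S_k}\}$ a partition of $S\cup\overline{S}$ and $\min|S_1|\le\dots\le\min|S_k|$ ($|S_i|=\{|j|:j\in S_i\}$). A PSSP of $S$ is an SSP of a (possibly empty) subset of $S$. $B(S,k)$, $B_{\subseteq}(S,k)$ are the sets of SSPs, PSSPs of $S$ with $k$ blocks, and $D_{\subseteq}([n],k)=B_{\subseteq}([n],k)\setminus\bigcup_{i=1}^nB([n]\setminus\{i\},k)$. For $\pi=(S_1,\dots,S_k)$, $\mathrm{pos}(\pi)=\#\{x\in\bigcup_iS_i:x>0\}$, $m(\pi)=2\sum_{i=1}^ki\cdot\#S_i-\mathrm{pos}(\pi)$,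 and $S_D[n,k]=\frac{1}{q^{k^2}[2]_q^k}\sum_{\pi\in D_{\subseteq}([n],k)}q^{m(\pi)}$. For $n=0$ the terms $n(t-1)^{n-1}$ and $[n]_qq^{n-1}(t)^D_{n-1,q}$ are $0$. *)

theory Defs
  imports Complex_Main
begin

definition qint :: "complex \<Rightarrow> nat \<Rightarrow> complex" where
  "qint q k = (\<Sum>i<k. q ^ i)"

definition qfallD :: "nat \<Rightarrow> complex \<Rightarrow> complex \<Rightarrow> nat \<Rightarrow> complex" where
  "qfallD n q t k =
     (if k = 0 then 1
      else if k < n then (\<Prod>i=1..k. t - qint q (2*i - 1))
      else if k = n then (\<Prod>i=1..n-1. t - qint q (2*i - 1)) * (t - qint q (n - 1))
      else 0)"

definition negset :: "int set \<Rightarrow> int set" where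
  "negset A = uminus ` A"

definition absset :: "int set \<Rightarrow> int set" where
  "absset A = abs ` A"

definition SSP :: "int set \<Rightarrow> nat \<Rightarrow> int set list \<Rightarrow> bool" where
  "SSP S k \<pi> \<longleftrightarrow>
     length \<pi> = k \<and>
     (\<forall>i<k. \<pi> ! i \<noteq> {}) \<and>
     (\<forall>i<k. \<forall>j<k. i \<noteq> j \<longrightarrow> \<pi> ! i \<inter> \<pi> ! j = {}) \<and>
     (\<forall>i<k. \<forall>j<k. i \<noteq> j \<longrightarrow> negset (\<pi> ! i) \<inter> negset (\<pi> ! j) = {}) \<and>
     (\<forall>i<k. \<forall>j<k. \<pi> ! i \<inter> negset (\<pi> ! j) = {}) \<and>
     (\<Union>i<k. \<pi> ! i \<union> negset (\<pi> ! i)) = S \<union> negset S \<and>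
     (\<forall>i j. i \<le> j \<and> j < k \<longrightarrow> Min (absset (\<pi> ! i)) \<le> Min (absset (\<pi> ! j)))"

definition Bset :: "int set \<Rightarrow> nat \<Rightarrow> int set list set" where
  "Bset S k = {\<pi>. SSP S k \<pi>}"

definition Bsub :: "nat \<Rightarrow> nat \<Rightarrow> int set list set" where
  "Bsub n k = {\<pi>. \<exists>T. T \<subseteq> {1..int n} \<and> SSP T k \<pi>}"

definition Dsub :: "nat \<Rightarrow> nat \<Rightarrow> int set list set" where
  "Dsub n k = Bsub n k - (\<Union>i\<in>{1..int n}. Bset ({1..int n} - {i}) k)"

definition pos :: "int set list \<Rightarrow> nat" where
  "pos \<pi> = card {x \<in> (\<Union>B\<in>set \<pi>. B). x > 0}"

definition mstat :: "int set list \<Rightarrow> int" where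
  "mstat \<pi> = 2 * (\<Sum>i<length \<pi>. int (i + 1) * int (card (\<pi> ! i))) - int (pos \<pi>)"

definition SD :: "complex \<Rightarrow> nat \<Rightarrow> nat \<Rightarrow> complex" where
  "SD q n k = (1 / (q ^ (k^2) * (qint q 2) ^ k)) * (\<Sum>\<pi>\<in>Dsub n k. q powi mstat \<pi>)"

end

theory Submission
  imports Defs
begin

definition SSP' :: "int set \<Rightarrow> nat \<Rightarrow> int set list \<Rightarrow> bool" where
  "SSP' T k \<pi> \<longleftrightarrow> length \<pi> = k \<and> (\<forall>i<k. \<pi>!i \<noteq> {}) \<and>
     (\<forall>i<k. \<forall>j<k. \<forall>x\<in>\<pi>!i. \<forall>y\<in>\<pi>!j. \<bar>x\<bar> = \<bar>y\<bar> \<longrightarrow> i = j \<and> x = y) \<and>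
     (\<Union>i<k. abs ` (\<pi>!i)) = T \<and>
     (\<forall>i j. i \<le> j \<and> j < k \<longrightarrow> Min (abs ` (\<pi>!i)) \<le> Min (abs ` (\<pi>!j)))"

lemma SSP_iff:
  assumes T: "T \<subseteq> {0<..}"
  shows "SSP T k \<pi> \<longleftrightarrow> SSP' T k \<pi>"
proof
  assume H: "SSP T k \<pi>"
  have H3: "\<forall>i<k. \<forall>j<k. i \<noteq> j \<longrightarrow> \<pi> ! i \<inter> \<pi> ! j = {}"
    using H unfolding SSP_def by (elim conjE) assumption
  have H5: "\<forall>i<k. \<forall>j<k. \<pi> ! i \<inter> negset (\<pi> ! j) = {}"
    using H unfolding SSP_def by (elim conjE) assumption
  have U: "(\<Union>i<k. \<pi> ! i \<union> uminus ` (\<pi> ! i)) = T \<union> uminus ` T"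
    using H unfolding SSP_def negset_def by simp
  have inj: "\<forall>i<k. \<forall>j<k. \<forall>x\<in>\<pi>!i. \<forall>y\<in>\<pi>!j. \<bar>x\<bar> = \<bar>y\<bar> \<longrightarrow> i = j \<and> x = y"
  proof (intro allI impI ballI)
    fix i j x y assume ij: "i < k" "j < k" "x \<in> \<pi>!i" "y \<in> \<pi>!j" "\<bar>x\<bar> = \<bar>y\<bar>"
    have x0: "x \<noteq> 0"
    proof
      assume "x = 0"
      then have "0 \<in> T \<union> uminus ` T" using U ij by blast
      then show False using T by auto
    qed
    have d1: "\<pi>!i \<inter> negset (\<pi>!j) = {}" using H5 ij by blast
    have d2: "i \<noteq> j \<longrightarrow> \<pi>!i \<inter> \<pi>!j = {}" using H3 ij by blast
    show "i = j \<and> x = y"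
    proof (cases "x = y")
      case True then show ?thesis using d2 ij by blast
    next
      case False
      then have "x = - y" using ij(5) by (auto simp: abs_if split: if_splits)
      then have "x \<in> \<pi>!i \<inter> negset (\<pi>!j)" using ij unfolding negset_def by auto
      then show ?thesis using d1 by blast
    qed
  qed
  have U2: "(\<Union>i<k. abs ` (\<pi>!i)) = T"
  proof
    show "(\<Union>i<k. abs ` (\<pi>!i)) \<subseteq> T"
    proof
      fix z assume "z \<in> (\<Union>i<k. abs ` (\<pi>!i))"
      then obtain i x where "i<k" "x \<in> \<pi>!i" "z = \<bar>x\<bar>" by blast
      then have "x \<in> T \<union> uminus ` T" using U by blast
      then show "z \<in> T" using T \<open>z = \<bar>x\<bar>\<close> by auto
    qed
    show "T \<subseteq> (\<Union>i<k. abs ` (\<pi>!i))"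
    proof
      fix z assume "z \<in> T"
      then have "z \<in> (\<Union>i<k. \<pi> ! i \<union> uminus ` (\<pi> ! i))" using U by blast
      then obtain i where i: "i<k" "z \<in> \<pi>!i \<or> -z \<in> \<pi>!i" by force
      have "z > 0" using T \<open>z \<in> T\<close> by auto
      then have "\<exists>x\<in>\<pi>!i. \<bar>x\<bar> = z" using i(2)
        by (metis abs_minus_cancel abs_of_pos)
      then show "z \<in> (\<Union>i<k. abs ` (\<pi>!i))" using i by force
    qed
  qed
  show "SSP' T k \<pi>" using H inj U2 unfolding SSP_def SSP'_def absset_def apply - apply (elim conjE) apply (intro conjI) apply assumption+ done
next
  assume H: "SSP' T k \<pi>"
  have inj: "\<forall>i<k. \<forall>j<k. \<forall>x\<in>\<pi>!i. \<forall>y\<in>\<pi>!j. \<bar>x\<bar> = \<bar>y\<bar> \<longrightarrow> i = j \<and> x = y"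
    and U2: "(\<Union>i<k. abs ` (\<pi>!i)) = T" using H unfolding SSP'_def by blast+
  have nz: "\<And>i x. i < k \<Longrightarrow> x \<in> \<pi>!i \<Longrightarrow> x \<noteq> 0"
  proof
    fix i x assume "i < k" "x \<in> \<pi>!i" "x = 0"
    then have "0 \<in> T" using U2 by force
    then show False using T by auto
  qed
  have c1: "\<forall>i<k. \<forall>j<k. i \<noteq> j \<longrightarrow> \<pi> ! i \<inter> \<pi> ! j = {}" using inj by blast
  have c2: "\<forall>i<k. \<forall>j<k. i \<noteq> j \<longrightarrow> negset (\<pi> ! i) \<inter> negset (\<pi> ! j) = {}"
    unfolding negset_def using inj by fastforce
  have c3: "\<forall>i<k. \<forall>j<k. \<pi> ! i \<inter> negset (\<pi> ! j) = {}"
  proof (intro allI impI)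
    fix i j assume "i < k" "j < k"
    show "\<pi> ! i \<inter> negset (\<pi> ! j) = {}"
    proof (rule ccontr)
      assume "\<pi> ! i \<inter> negset (\<pi> ! j) \<noteq> {}"
      then obtain x where x: "x \<in> \<pi>!i" "-x \<in> \<pi>!j" unfolding negset_def by force
      then have "x = -x" using inj \<open>i<k\<close> \<open>j<k\<close> by (metis abs_minus_cancel)
      then show False using nz x \<open>i<k\<close> by simp
    qed
  qed
  have c4: "(\<Union>i<k. \<pi> ! i \<union> negset (\<pi> ! i)) = T \<union> negset T"
  proof
    show "(\<Union>i<k. \<pi> ! i \<union> negset (\<pi> ! i)) \<subseteq> T \<union> negset T"
    proof
      fix z assume "z \<in> (\<Union>i<k. \<pi> ! i \<union> negset (\<pi> ! i))"
      then obtain i x where i: "i < k" "x \<in> \<pi>!i" "z = x \<or> z = -x" unfolding negset_def by blast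
      have "\<bar>x\<bar> \<in> T" using U2 i by blast
      have "x \<in> T \<union> uminus ` T"
      proof (cases "x \<ge> 0")
        case True then show ?thesis using \<open>\<bar>x\<bar> \<in> T\<close> by simp
      next
        case False then have "x = - \<bar>x\<bar>" by simp
        then show ?thesis using \<open>\<bar>x\<bar> \<in> T\<close> by blast
      qed
      then show "z \<in> T \<union> negset T" using i unfolding negset_def by auto
    qed
    show "T \<union> negset T \<subseteq> (\<Union>i<k. \<pi> ! i \<union> negset (\<pi> ! i))"
    proof
      fix z assume "z \<in> T \<union> negset T"
      then obtain y where y: "y \<in> T" "z = y \<or> z = -y" unfolding negset_def by blast
      then obtain i x where i: "i<k" "x \<in> \<pi>!i" "\<bar>x\<bar> = y" using U2 by blast
      then have "x = y \<or> x = -y" by auto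
      then show "z \<in> (\<Union>i<k. \<pi> ! i \<union> negset (\<pi> ! i))" using y i unfolding negset_def
        by (auto intro!: bexI[of _ i] simp: image_iff)
    qed
  qed
  show "SSP T k \<pi>" using H c1 c2 c3 c4 unfolding SSP_def SSP'_def absset_def apply - apply (elim conjE) apply (intro conjI) apply assumption+ done
qed

lemma SSP'_len: "SSP' T k \<pi> \<Longrightarrow> length \<pi> = k" unfolding SSP'_def by blast
lemma SSP'_ne: "SSP' T k \<pi> \<Longrightarrow> i < k \<Longrightarrow> \<pi>!i \<noteq> {}" unfolding SSP'_def by blast
lemma SSP'_inj: "SSP' T k \<pi> \<Longrightarrow> i<k \<Longrightarrow> j<k \<Longrightarrow> x\<in>\<pi>!i \<Longrightarrow> y\<in>\<pi>!j \<Longrightarrow> \<bar>x\<bar> = \<bar>y\<bar> \<Longrightarrow> i = j \<and> x = y"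
  unfolding SSP'_def by blast
lemma SSP'_U: "SSP' T k \<pi> \<Longrightarrow> (\<Union>i<k. abs ` (\<pi>!i)) = T" unfolding SSP'_def by blast
lemma SSP'_mono: "SSP' T k \<pi> \<Longrightarrow> i \<le> j \<Longrightarrow> j < k \<Longrightarrow> Min (abs ` (\<pi>!i)) \<le> Min (abs ` (\<pi>!j))"
  unfolding SSP'_def by blast
lemma SSP'_abs: "SSP' T k \<pi> \<Longrightarrow> i < k \<Longrightarrow> x \<in> \<pi>!i \<Longrightarrow> \<bar>x\<bar> \<in> T"
  using SSP'_U by blast
lemma SSP'_cover: "SSP' T k \<pi> \<Longrightarrow> y \<in> T \<Longrightarrow> \<exists>i<k. \<exists>x\<in>\<pi>!i. \<bar>x\<bar> = y"
  using SSP'_U by blast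
lemma SSP'_sub: "SSP' T k \<pi> \<Longrightarrow> i < k \<Longrightarrow> \<pi>!i \<subseteq> T \<union> uminus ` T"
proof
  fix x assume "SSP' T k \<pi>" "i < k" "x \<in> \<pi>!i"
  then have "\<bar>x\<bar> \<in> T" by (rule SSP'_abs)
  then show "x \<in> T \<union> uminus ` T"
    by (cases "x \<ge> 0") (simp, metis UnI2 abs_of_neg image_eqI linorder_not_le minus_minus)
qed
lemma SSP'_fin: "finite T \<Longrightarrow> SSP' T k \<pi> \<Longrightarrow> i < k \<Longrightarrow> finite (\<pi>!i)"
  using SSP'_sub by (meson finite_Un finite_imageI finite_subset)
lemma SSP'_finabs: "finite T \<Longrightarrow> SSP' T k \<pi> \<Longrightarrow> i < k \<Longrightarrow> finite (abs ` (\<pi>!i))"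
  using SSP'_fin by blast
lemma SSP'_Min_in: "finite T \<Longrightarrow> SSP' T k \<pi> \<Longrightarrow> i < k \<Longrightarrow> Min (abs ` (\<pi>!i)) \<in> abs ` (\<pi>!i)"
  using SSP'_finabs SSP'_ne by (meson Min_in image_is_empty)
lemma SSP'_unique: "SSP' T k \<pi> \<Longrightarrow> SSP' T' k \<pi> \<Longrightarrow> T = T'"
  using SSP'_U by blast

lemma finite_SSP': assumes "finite T" shows "finite {\<pi>. SSP' T k \<pi>}"
proof (rule finite_subset)
  show "{\<pi>. SSP' T k \<pi>} \<subseteq> {xs. set xs \<subseteq> Pow (T \<union> uminus ` T) \<and> length xs = k}"
  proof
    fix \<pi> assume H: "\<pi> \<in> {\<pi>. SSP' T k \<pi>}"
    then have H: "SSP' T k \<pi>" by simp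
    have "set \<pi> \<subseteq> Pow (T \<union> uminus ` T)"
    proof
      fix x assume "x \<in> set \<pi>"
      then obtain i where "i < k" "x = \<pi>!i" using SSP'_len[OF H] by (metis in_set_conv_nth)
      then show "x \<in> Pow (T \<union> uminus ` T)" using SSP'_sub[OF H] by blast
    qed
    then show "\<pi> \<in> {xs. set xs \<subseteq> Pow (T \<union> uminus ` T) \<and> length xs = k}"
      using SSP'_len[OF H] by simp
  qed
  show "finite {xs. set xs \<subseteq> Pow (T \<union> uminus ` T) \<and> length xs = k}"
    using assms by (intro finite_lists_length_eq) auto
qed

lemma SSP'_append:
  assumes H: "SSP' T j \<pi>" and fT: "finite T" and lt: "\<forall>y\<in>T. y < \<bar>s\<bar>" and s0: "s \<noteq> 0"
  shows "SSP' (insert \<bar>s\<bar> T) (Suc j) (\<pi> @ [{s}])"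
proof -
  let ?p = "\<pi> @ [{s}]"
  have len: "length \<pi> = j" using H by (rule SSP'_len)
  have nth: "\<And>i. i < Suc j \<Longrightarrow> ?p!i = (if i < j then \<pi>!i else {s})"
    using len by (auto simp: nth_append)
  have c1: "length ?p = Suc j" using len by simp
  have c2: "\<forall>i<Suc j. ?p!i \<noteq> {}" using nth SSP'_ne[OF H] by auto
  have c3: "\<forall>i<Suc j. \<forall>i'<Suc j. \<forall>x\<in>?p!i. \<forall>y\<in>?p!i'. \<bar>x\<bar> = \<bar>y\<bar> \<longrightarrow> i = i' \<and> x = y"
  proof (intro allI impI ballI)
    fix i i' x y assume a: "i < Suc j" "i' < Suc j" "x \<in> ?p!i" "y \<in> ?p!i'" "\<bar>x\<bar> = \<bar>y\<bar>"
    show "i = i' \<and> x = y"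
    proof (cases "i < j")
      case True
      then have x: "x \<in> \<pi>!i" using a nth by simp
      then have "\<bar>x\<bar> < \<bar>s\<bar>" using lt SSP'_abs[OF H True] by blast
      show ?thesis
      proof (cases "i' < j")
        case True then show ?thesis using a nth x SSP'_inj[OF H] \<open>i<j\<close> by simp
      next
        case False then have "y = s" using a nth by simp
        then show ?thesis using \<open>\<bar>x\<bar> < \<bar>s\<bar>\<close> a by simp
      qed
    next
      case False
      then have "x = s" "i = j" using a nth by auto
      show ?thesis
      proof (cases "i' < j")
        case True
        then have "y \<in> \<pi>!i'" using a nth by simp
        then have "\<bar>y\<bar> < \<bar>s\<bar>" using lt SSP'_abs[OF H True] by blast
        then show ?thesis using \<open>x = s\<close> a by simp
      next
        case False then show ?thesis using a nth \<open>x = s\<close> \<open>i = j\<close> by simp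
      qed
    qed
  qed
  have c4: "(\<Union>i<Suc j. abs ` (?p!i)) = insert \<bar>s\<bar> T"
  proof -
    have "(\<Union>i<Suc j. abs ` (?p!i)) = (\<Union>i<j. abs ` (?p!i)) \<union> abs ` (?p!j)"
      by (simp add: lessThan_Suc Un_commute)
    also have "(\<Union>i<j. abs ` (?p!i)) = (\<Union>i<j. abs ` (\<pi>!i))" using nth by simp
    also have "\<dots> = T" using SSP'_U[OF H] .
    finally show ?thesis using nth by simp
  qed
  have c5: "\<forall>i i'. i \<le> i' \<and> i' < Suc j \<longrightarrow> Min (abs ` (?p!i)) \<le> Min (abs ` (?p!i'))"
  proof (intro allI impI)
    fix i i' assume a: "i \<le> i' \<and> i' < Suc j"
    show "Min (abs ` (?p!i)) \<le> Min (abs ` (?p!i'))"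
    proof (cases "i' < j")
      case True then show ?thesis using a nth SSP'_mono[OF H] by simp
    next
      case False
      then have "?p!i' = {s}" using a nth by simp
      show ?thesis
      proof (cases "i < j")
        case True
        have "Min (abs ` (\<pi>!i)) \<in> T" using SSP'_Min_in[OF fT H True] SSP'_abs[OF H True] by fastforce
        then show ?thesis using True nth a \<open>?p!i' = {s}\<close> lt by fastforce
      next
        case False then have "i = i'" using a \<open>\<not> i' < j\<close> by simp
        then show ?thesis by simp
      qed
    qed
  qed
  show ?thesis unfolding SSP'_def using c1 c2 c3 c4 c5 by blast
qed

lemma SSP'_butlast:
  assumes H: "SSP' T (Suc j) \<pi>" and L: "last \<pi> = {s}"
  shows "SSP' (T - {\<bar>s\<bar>}) j (butlast \<pi>)"
proof -
  have len: "length \<pi> = Suc j" using H by (rule SSP'_len)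
  have pj: "\<pi>!j = {s}" using L len by (metis diff_Suc_1 last_conv_nth list.size(3) nat.distinct(1))
  let ?b = "butlast \<pi>"
  have nth: "\<And>i. i < j \<Longrightarrow> ?b!i = \<pi>!i" using len by (simp add: nth_butlast)
  have c1: "length ?b = j" using len by simp
  have c2: "\<forall>i<j. ?b!i \<noteq> {}" using nth SSP'_ne[OF H] by simp
  have c3: "\<forall>i<j. \<forall>i'<j. \<forall>x\<in>?b!i. \<forall>y\<in>?b!i'. \<bar>x\<bar> = \<bar>y\<bar> \<longrightarrow> i = i' \<and> x = y"
  proof (intro allI impI ballI)
    fix i i' x y assume a: "i < j" "i' < j" "x \<in> ?b!i" "y \<in> ?b!i'" "\<bar>x\<bar> = \<bar>y\<bar>"
    have x: "x \<in> \<pi>!i" using a(3) nth[OF a(1)] by simp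
    have y: "y \<in> \<pi>!i'" using a(4) nth[OF a(2)] by simp
    have "i < Suc j" "i' < Suc j" using a(1,2) by simp_all
    from SSP'_inj[OF H this x y a(5)] show "i = i' \<and> x = y" .
  qed
  have c5: "\<forall>i i'. i \<le> i' \<and> i' < j \<longrightarrow> Min (abs ` (?b!i)) \<le> Min (abs ` (?b!i'))"
    using nth SSP'_mono[OF H] by simp
  have c4: "(\<Union>i<j. abs ` (?b!i)) = T - {\<bar>s\<bar>}"
  proof -
    have e: "(\<Union>i<j. abs ` (?b!i)) = (\<Union>i<j. abs ` (\<pi>!i))" using nth by simp
    have "T = (\<Union>i<Suc j. abs ` (\<pi>!i))" using SSP'_U[OF H] by simp
    also have "\<dots> = (\<Union>i<j. abs ` (\<pi>!i)) \<union> {\<bar>s\<bar>}" using pj by (simp add: lessThan_Suc Un_commute)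
    finally have T: "T = (\<Union>i<j. abs ` (\<pi>!i)) \<union> {\<bar>s\<bar>}" .
    have "\<bar>s\<bar> \<notin> (\<Union>i<j. abs ` (\<pi>!i))"
    proof
      assume "\<bar>s\<bar> \<in> (\<Union>i<j. abs ` (\<pi>!i))"
      then obtain i x where "i < j" "x \<in> \<pi>!i" "\<bar>s\<bar> = \<bar>x\<bar>" by blast
      then have "i = j" using SSP'_inj[OF H, of i j x s] pj by simp
      then show False using \<open>i < j\<close> by simp
    qed
    then have "((\<Union>i<j. abs ` (\<pi>!i)) \<union> {\<bar>s\<bar>}) - {\<bar>s\<bar>} = (\<Union>i<j. abs ` (\<pi>!i))" by blast
    then show ?thesis using e T by simp
  qed
  show ?thesis unfolding SSP'_def using c1 c2 c3 c4 c5 by blast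
qed

lemma SSP'_update:
  assumes H: "SSP' T k \<pi>" and fT: "finite T" and lt: "\<forall>y\<in>T. y < \<bar>s\<bar>" and i: "i < k"
  shows "SSP' (insert \<bar>s\<bar> T) k (\<pi>[i := \<pi>!i \<union> {s}])"
proof -
  let ?p = "\<pi>[i := \<pi>!i \<union> {s}]"
  have len: "length \<pi> = k" using H by (rule SSP'_len)
  have nth: "\<And>i'. i' < k \<Longrightarrow> ?p!i' = (if i' = i then \<pi>!i \<union> {s} else \<pi>!i')"
    using len i by simp
  have mem: "\<And>i' z. i' < k \<Longrightarrow> z \<in> ?p!i' \<longleftrightarrow> z \<in> \<pi>!i' \<or> (i' = i \<and> z = s)"
    using nth by auto
  have small: "\<And>i' z. i' < k \<Longrightarrow> z \<in> \<pi>!i' \<Longrightarrow> \<bar>z\<bar> < \<bar>s\<bar>" using lt SSP'_abs[OF H] by blast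
  have c1: "length ?p = k" using len by simp
  have c2: "\<forall>i'<k. ?p!i' \<noteq> {}" using mem SSP'_ne[OF H] by blast
  have c3: "\<forall>i1<k. \<forall>i2<k. \<forall>x\<in>?p!i1. \<forall>y\<in>?p!i2. \<bar>x\<bar> = \<bar>y\<bar> \<longrightarrow> i1 = i2 \<and> x = y"
  proof (intro allI impI ballI)
    fix i1 i2 x y assume a: "i1 < k" "i2 < k" "x \<in> ?p!i1" "y \<in> ?p!i2" "\<bar>x\<bar> = \<bar>y\<bar>"
    have x: "x \<in> \<pi>!i1 \<or> (i1 = i \<and> x = s)" using mem a by blast
    have y: "y \<in> \<pi>!i2 \<or> (i2 = i \<and> y = s)" using mem a by blast
    show "i1 = i2 \<and> x = y"
    proof (cases "x \<in> \<pi>!i1")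
      case True
      then have "\<bar>x\<bar> < \<bar>s\<bar>" using small a by blast
      then have "y \<in> \<pi>!i2" using y a by auto
      then show ?thesis using True SSP'_inj[OF H] a by blast
    next
      case False
      then have "i1 = i" "x = s" using x by auto
      then have "y = s \<and> i2 = i" using y small a by fastforce
      then show ?thesis using \<open>i1 = i\<close> \<open>x = s\<close> by simp
    qed
  qed
  have c4: "(\<Union>i'<k. abs ` (?p!i')) = insert \<bar>s\<bar> T"
  proof -
    have "(\<Union>i'<k. abs ` (?p!i')) = insert \<bar>s\<bar> (\<Union>i'<k. abs ` (\<pi>!i'))"
      using mem i by blast
    then show ?thesis using SSP'_U[OF H] by simp
  qed
  have minq: "\<And>i'. i' < k \<Longrightarrow> Min (abs ` (?p!i')) = Min (abs ` (\<pi>!i'))"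
  proof -
    fix i' assume i': "i' < k"
    show "Min (abs ` (?p!i')) = Min (abs ` (\<pi>!i'))"
    proof (cases "i' = i")
      case True
      have "abs ` (?p!i') = insert \<bar>s\<bar> (abs ` (\<pi>!i))" using nth i' True by simp
      moreover have "Min (abs ` (\<pi>!i)) < \<bar>s\<bar>"
        using SSP'_Min_in[OF fT H i] small[OF i] by fastforce
      ultimately show ?thesis using True SSP'_finabs[OF fT H i] SSP'_ne[OF H i] by simp
    next
      case False then show ?thesis using nth i' by simp
    qed
  qed
  have c5: "\<forall>i1 i2. i1 \<le> i2 \<and> i2 < k \<longrightarrow> Min (abs ` (?p!i1)) \<le> Min (abs ` (?p!i2))"
    using minq SSP'_mono[OF H] by simp
  show ?thesis unfolding SSP'_def using c1 c2 c3 c4 c5 by blast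
qed

lemma SSP'_remove:
  assumes H: "SSP' T k \<pi>" and fT: "finite T" and i: "i < k" and s: "s \<in> \<pi>!i" and ns: "\<pi>!i \<noteq> {s}"
    and le: "\<forall>y\<in>T. y \<le> \<bar>s\<bar>"
  shows "SSP' (T - {\<bar>s\<bar>}) k (\<pi>[i := \<pi>!i - {s}])"
proof -
  let ?p = "\<pi>[i := \<pi>!i - {s}]"
  have len: "length \<pi> = k" using H by (rule SSP'_len)
  have nth: "\<And>i'. i' < k \<Longrightarrow> ?p!i' = (if i' = i then \<pi>!i - {s} else \<pi>!i')"
    using len i by simp
  have sonly: "\<And>i' x. i' < k \<Longrightarrow> x \<in> \<pi>!i' \<Longrightarrow> \<bar>x\<bar> = \<bar>s\<bar> \<Longrightarrow> i' = i \<and> x = s"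
    using SSP'_inj[OF H _ i _ s] by blast
  have mem: "\<And>i' z. i' < k \<Longrightarrow> z \<in> ?p!i' \<longleftrightarrow> z \<in> \<pi>!i' \<and> z \<noteq> s"
  proof -
    fix i' z assume i': "i' < k"
    show "z \<in> ?p!i' \<longleftrightarrow> z \<in> \<pi>!i' \<and> z \<noteq> s"
    proof (cases "i' = i")
      case True then show ?thesis using nth[OF i'] by simp
    next
      case False
      have "z \<in> \<pi>!i' \<Longrightarrow> z \<noteq> s" using sonly[OF i', of z] False by auto
      then show ?thesis using nth[OF i'] False by auto
    qed
  qed
  have c1: "length ?p = k" using len by simp
  have c2: "\<forall>i'<k. ?p!i' \<noteq> {}"
  proof (intro allI impI)
    fix i' assume i': "i' < k"
    show "?p!i' \<noteq> {}"
    proof (cases "i' = i")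
      case True then show ?thesis using nth i' s ns by auto
    next
      case False then show ?thesis using nth i' SSP'_ne[OF H i'] by simp
    qed
  qed
  have c3: "\<forall>i1<k. \<forall>i2<k. \<forall>x\<in>?p!i1. \<forall>y\<in>?p!i2. \<bar>x\<bar> = \<bar>y\<bar> \<longrightarrow> i1 = i2 \<and> x = y"
  proof (intro allI impI ballI)
    fix i1 i2 x y assume a: "i1 < k" "i2 < k" "x \<in> ?p!i1" "y \<in> ?p!i2" "\<bar>x\<bar> = \<bar>y\<bar>"
    have "x \<in> \<pi>!i1" "y \<in> \<pi>!i2" using mem[OF a(1)] mem[OF a(2)] a(3,4) by auto
    then show "i1 = i2 \<and> x = y" using SSP'_inj[OF H a(1,2)] a(5) by blast
  qed
  have absp: "\<And>i'. i' < k \<Longrightarrow> abs ` (?p!i') = abs ` (\<pi>!i') - {\<bar>s\<bar>}"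
  proof -
    fix i' assume i': "i' < k"
    show "abs ` (?p!i') = abs ` (\<pi>!i') - {\<bar>s\<bar>}"
    proof
      show "abs ` (?p!i') \<subseteq> abs ` (\<pi>!i') - {\<bar>s\<bar>}"
      proof
        fix z assume "z \<in> abs ` (?p!i')"
        then obtain x where x: "x \<in> ?p!i'" "z = \<bar>x\<bar>" by blast
        then have x2: "x \<in> \<pi>!i'" "x \<noteq> s" using mem[OF i'] by auto
        then have "z \<noteq> \<bar>s\<bar>" using sonly[OF i' x2(1)] x(2) by auto
        then show "z \<in> abs ` (\<pi>!i') - {\<bar>s\<bar>}" using x2 x(2) by blast
      qed
      show "abs ` (\<pi>!i') - {\<bar>s\<bar>} \<subseteq> abs ` (?p!i')"
      proof
        fix z assume "z \<in> abs ` (\<pi>!i') - {\<bar>s\<bar>}"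
        then obtain x where x: "x \<in> \<pi>!i'" "z = \<bar>x\<bar>" "z \<noteq> \<bar>s\<bar>" by blast
        then have "x \<noteq> s" using x by auto
        then have "x \<in> ?p!i'" using mem[OF i'] x(1) by blast
        then show "z \<in> abs ` (?p!i')" using x(2) by blast
      qed
    qed
  qed
  have c4: "(\<Union>i'<k. abs ` (?p!i')) = T - {\<bar>s\<bar>}"
  proof -
    have "(\<Union>i'<k. abs ` (?p!i')) = (\<Union>i'<k. abs ` (\<pi>!i') - {\<bar>s\<bar>})"
      using absp by simp
    also have "\<dots> = (\<Union>i'<k. abs ` (\<pi>!i')) - {\<bar>s\<bar>}" by blast
    finally show ?thesis using SSP'_U[OF H] by simp
  qed
  have minq: "\<And>i'. i' < k \<Longrightarrow> Min (abs ` (?p!i')) = Min (abs ` (\<pi>!i'))"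
  proof -
    fix i' assume i': "i' < k"
    show "Min (abs ` (?p!i')) = Min (abs ` (\<pi>!i'))"
    proof (cases "i' = i")
      case True
      obtain x where x: "x \<in> \<pi>!i" "x \<noteq> s" using s ns by blast
      have "\<bar>x\<bar> \<noteq> \<bar>s\<bar>" using sonly[OF i x(1)] x(2) by blast
      moreover have "\<bar>x\<bar> \<le> \<bar>s\<bar>" using le SSP'_abs[OF H i x(1)] by blast
      ultimately have xs: "\<bar>x\<bar> < \<bar>s\<bar>" by simp
      let ?A = "abs ` (\<pi>!i)"
      have fA: "finite ?A" using SSP'_finabs[OF fT H i] .
      have "Min ?A \<le> \<bar>x\<bar>" using fA x(1) by simp
      then have mA: "Min ?A \<noteq> \<bar>s\<bar>" using xs by simp
      have MinA: "Min ?A \<in> ?A" using SSP'_Min_in[OF fT H i] .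
      have eq: "abs ` (?p!i') = ?A - {\<bar>s\<bar>}" using absp[OF i'] True by simp
      have "Min (?A - {\<bar>s\<bar>}) = Min ?A"
        by (rule Min_eqI) (use fA MinA mA in auto)
      then show ?thesis using eq True by simp
    next
      case False then show ?thesis using nth i' by simp
    qed
  qed
  have c5: "\<forall>i1 i2. i1 \<le> i2 \<and> i2 < k \<longrightarrow> Min (abs ` (?p!i1)) \<le> Min (abs ` (?p!i2))"
    using minq SSP'_mono[OF H] by simp
  show ?thesis unfolding SSP'_def using c1 c2 c3 c4 c5 by blast
qed

lemma SSP'_single_last:
  assumes H: "SSP' T k \<pi>" and fT: "finite T" and i: "i < k" and si: "\<pi>!i = {s}"
    and le: "\<forall>y\<in>T. y \<le> \<bar>s\<bar>"
  shows "i = k - 1"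
proof (rule ccontr)
  assume "i \<noteq> k - 1"
  then have ij: "i < k - 1" using i by simp
  have j: "k - 1 < k" using i by simp
  have "Min (abs ` (\<pi>!i)) \<le> Min (abs ` (\<pi>!(k-1)))" using SSP'_mono[OF H, of i "k-1"] ij j by simp
  then have m: "\<bar>s\<bar> \<le> Min (abs ` (\<pi>!(k-1)))" using si by simp
  obtain x where x: "x \<in> \<pi>!(k-1)" "\<bar>x\<bar> = Min (abs ` (\<pi>!(k-1)))"
    using SSP'_Min_in[OF fT H j] by auto
  have "\<bar>x\<bar> \<le> \<bar>s\<bar>" using le SSP'_abs[OF H j x(1)] by blast
  then have "\<bar>x\<bar> = \<bar>s\<bar>" using m x by simp
  then have "k - 1 = i" using SSP'_inj[OF H j i x(1)] si by simp
  then show False using ij by simp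
qed

lemma Union_set_nth: "\<Union>(set xs) = (\<Union>i<length xs. xs!i)"
  by (auto simp: set_conv_nth)

lemma pos_insert:
  assumes "finite U" "s \<notin> U"
  shows "card {x \<in> insert s U. x > 0} = card {x \<in> U. x > (0::int)} + (if s > 0 then 1 else 0)"
proof (cases "s > 0")
  case True
  then have "{x \<in> insert s U. x > 0} = insert s {x \<in> U. x > 0}" by auto
  then show ?thesis using assms True by simp
next
  case False
  then have "{x \<in> insert s U. x > 0} = {x \<in> U. x > 0}" by auto
  then show ?thesis using False by simp
qed

lemma pos_append:
  assumes "finite (\<Union>(set \<pi>))" "s \<notin> \<Union>(set \<pi>)"
  shows "pos (\<pi> @ [{s}]) = pos \<pi> + (if s > 0 then 1 else 0)"
proof -
  have "\<Union>(set (\<pi> @ [{s}])) = insert s (\<Union>(set \<pi>))" by auto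
  then show ?thesis unfolding pos_def using pos_insert[OF assms] by simp
qed

lemma pos_update:
  assumes "i < length \<pi>" "finite (\<Union>(set \<pi>))" "s \<notin> \<Union>(set \<pi>)"
  shows "pos (\<pi>[i := \<pi>!i \<union> {s}]) = pos \<pi> + (if s > 0 then 1 else 0)"
proof -
  have "\<Union>(set (\<pi>[i := \<pi>!i \<union> {s}])) = insert s (\<Union>(set \<pi>))"
    unfolding Union_set_nth using assms(1) by (auto simp: nth_list_update split: if_splits)
  then show ?thesis unfolding pos_def using pos_insert[OF assms(2,3)] by simp
qed

lemma mstat_append:
  assumes fin: "\<forall>B\<in>set \<pi>. finite B" and s: "s \<notin> \<Union>(set \<pi>)"
  shows "mstat (\<pi> @ [{s}]) = mstat \<pi> + int (2 * length \<pi> + (if s > 0 then 1 else 2))"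
proof -
  have fU: "finite (\<Union>(set \<pi>))" using fin by blast
  have "(\<Sum>i<length (\<pi> @ [{s}]). int (i + 1) * int (card ((\<pi> @ [{s}]) ! i)))
      = (\<Sum>i<length \<pi>. int (i + 1) * int (card ((\<pi> @ [{s}]) ! i))) + int (length \<pi> + 1)"
    by (simp add: nth_append)
  also have "(\<Sum>i<length \<pi>. int (i + 1) * int (card ((\<pi> @ [{s}]) ! i)))
      = (\<Sum>i<length \<pi>. int (i + 1) * int (card (\<pi> ! i)))"
    by (rule sum.cong) (auto simp: nth_append)
  finally have e: "(\<Sum>i<length (\<pi> @ [{s}]). int (i + 1) * int (card ((\<pi> @ [{s}]) ! i)))
      = (\<Sum>i<length \<pi>. int (i + 1) * int (card (\<pi> ! i))) + int (length \<pi> + 1)" .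
  show ?thesis unfolding mstat_def e pos_append[OF fU s] by simp
qed

lemma mstat_update:
  assumes i: "i < length \<pi>" and fin: "\<forall>B\<in>set \<pi>. finite B" and s: "s \<notin> \<Union>(set \<pi>)"
  shows "mstat (\<pi>[i := \<pi>!i \<union> {s}]) = mstat \<pi> + int (2 * i + (if s > 0 then 1 else 2))"
proof -
  have fU: "finite (\<Union>(set \<pi>))" using fin by blast
  have fi: "finite (\<pi>!i)" using fin i by simp
  have si: "s \<notin> \<pi>!i" using s i by (metis UnionI nth_mem)
  have c: "card (\<pi>!i \<union> {s}) = card (\<pi>!i) + 1" using fi si by simp
  have "(\<Sum>i'<length \<pi>. int (i' + 1) * int (card ((\<pi>[i := \<pi>!i \<union> {s}]) ! i')))
      = (\<Sum>i'<length \<pi>. int (i' + 1) * int (card (\<pi> ! i')) + (if i' = i then int (i + 1) else 0))"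
    by (rule sum.cong) (auto simp: nth_list_update fi si algebra_simps)
  also have "\<dots> = (\<Sum>i'<length \<pi>. int (i' + 1) * int (card (\<pi> ! i'))) + int (i + 1)"
    using i by (simp add: sum.distrib)
  finally have e: "(\<Sum>i'<length (\<pi>[i := \<pi>!i \<union> {s}]). int (i' + 1) * int (card ((\<pi>[i := \<pi>!i \<union> {s}]) ! i')))
      = (\<Sum>i'<length \<pi>. int (i' + 1) * int (card (\<pi> ! i'))) + int (i + 1)" by simp
  show ?thesis unfolding mstat_def e pos_update[OF i fU s] by simp
qed

lemma SSP'_blocks_fin: "finite T \<Longrightarrow> SSP' T k \<pi> \<Longrightarrow> \<forall>B\<in>set \<pi>. finite B"
  using SSP'_fin SSP'_len by (metis in_set_conv_nth)

lemma SSP'_notin: "SSP' T k \<pi> \<Longrightarrow> \<bar>s\<bar> \<notin> T \<Longrightarrow> s \<notin> \<Union>(set \<pi>)"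
  unfolding Union_set_nth using SSP'_abs SSP'_len by (metis UN_E lessThan_iff)

lemma qint_even: "q * qint q (2*m) = (\<Sum>i<m. q^(2*i+1)*(1+q))"
proof (induction m)
  case 0 then show ?case by (simp add: qint_def)
next
  case (Suc m)
  have "qint q (2 * Suc m) = qint q (2*m) + q^(2*m) + q^(2*m+1)"
    by (simp add: qint_def)
  then show ?case using Suc by (simp add: algebra_simps power_add)
qed

definition W :: "complex \<Rightarrow> int set \<Rightarrow> nat \<Rightarrow> complex" where
  "W q T k = (\<Sum>\<pi>\<in>{\<pi>. SSP' T k \<pi>}. q powi mstat \<pi>)"

lemma W_rec:
  assumes fT: "finite T" and Tpos: "T \<subseteq> {0<..}" and ne: "T \<noteq> {}" and q0: "q \<noteq> 0"
  shows "W q T (Suc j) = q^(2*j+1)*(1+q) * W q (T - {Max T}) j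
                         + q * qint q (2 * Suc j) * W q (T - {Max T}) (Suc j)"
proof -
  define a where "a = Max T"
  define T' where "T' = T - {a}"
  have aT: "a \<in> T" using fT ne a_def by simp
  have a0: "a > 0" using aT Tpos by auto
  have aa: "\<bar>a\<bar> = a" "\<bar>-a\<bar> = a" using a0 by auto
  have ale: "\<forall>y\<in>T. y \<le> a" using fT a_def by simp
  have lt: "\<forall>y\<in>T'. y < a" using ale T'_def by force
  have TT: "insert a T' = T" using aT T'_def by blast
  have fT': "finite T'" using fT T'_def by simp
  have aT': "a \<notin> T'" using T'_def by simp
  define w where "w = (\<lambda>\<pi>. q powi mstat \<pi>)"
  define X where "X = {\<pi>. SSP' T (Suc j) \<pi>}"
  define X1 where "X1 = {\<pi>\<in>X. last \<pi> = {a} \<or> last \<pi> = {-a}}"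
  define Y1 where "Y1 = {\<pi>. SSP' T' j \<pi>}"
  define Y2 where "Y2 = {\<pi>. SSP' T' (Suc j) \<pi>}"
  define S where "S = {a, -a}"
  have Sabs: "\<And>s. s \<in> S \<Longrightarrow> \<bar>s\<bar> = a" using aa S_def by auto
  have S0: "\<And>s. s \<in> S \<Longrightarrow> s \<noteq> 0" using a0 S_def by auto
  have fX: "finite X" unfolding X_def using finite_SSP'[OF fT] .
  have fY1: "finite Y1" unfolding Y1_def using finite_SSP'[OF fT'] .
  have fY2: "finite Y2" unfolding Y2_def using finite_SSP'[OF fT'] .
  have X1X: "X1 \<subseteq> X" unfolding X1_def by blast
  define f1 where "f1 = (\<lambda>(\<pi>::int set list, s::int). \<pi> @ [{s}])"
  define g1 where "g1 = (\<lambda>\<pi>::int set list. (butlast \<pi>, if last \<pi> = {a} then a else -a))"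
  have bij1: "bij_betw f1 (Y1 \<times> S) X1"
  proof (rule bij_betw_byWitness[where f' = g1])
    show "\<forall>x\<in>Y1 \<times> S. g1 (f1 x) = x"
    proof
      fix x assume "x \<in> Y1 \<times> S"
      then obtain \<pi> s where x: "x = (\<pi>, s)" "s \<in> S" by blast
      have "(if {s} = {a} then a else -a) = s" using x(2) a0 S_def by auto
      then show "g1 (f1 x) = x" unfolding f1_def g1_def x by simp
    qed
    show "\<forall>\<pi>\<in>X1. f1 (g1 \<pi>) = \<pi>"
    proof
      fix \<pi> assume "\<pi> \<in> X1"
      then have "SSP' T (Suc j) \<pi>" "last \<pi> = {a} \<or> last \<pi> = {-a}" unfolding X1_def X_def by auto
      then have ne: "\<pi> \<noteq> []" and l: "last \<pi> = {if last \<pi> = {a} then a else -a}"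
        using SSP'_len by fastforce+
      have "f1 (g1 \<pi>) = butlast \<pi> @ [last \<pi>]" unfolding f1_def g1_def using l by simp
      then show "f1 (g1 \<pi>) = \<pi>" using ne by simp
    qed
    show "f1 ` (Y1 \<times> S) \<subseteq> X1"
    proof
      fix y assume "y \<in> f1 ` (Y1 \<times> S)"
      then obtain \<pi> s where y: "y = \<pi> @ [{s}]" "SSP' T' j \<pi>" "s \<in> S" unfolding f1_def Y1_def by auto
      have "SSP' (insert \<bar>s\<bar> T') (Suc j) (\<pi> @ [{s}])"
        using SSP'_append[OF y(2) fT' _ S0[OF y(3)]] lt Sabs[OF y(3)] by simp
      then have "SSP' T (Suc j) y" using TT Sabs[OF y(3)] y(1) by simp
      moreover have "last y = {a} \<or> last y = {-a}" using y(1,3) S_def by auto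
      ultimately show "y \<in> X1" unfolding X1_def X_def by simp
    qed
    show "g1 ` X1 \<subseteq> Y1 \<times> S"
    proof
      fix y assume "y \<in> g1 ` X1"
      then obtain \<pi> where p: "\<pi> \<in> X1" "y = g1 \<pi>" by blast
      then have H: "SSP' T (Suc j) \<pi>" and L: "last \<pi> = {a} \<or> last \<pi> = {-a}"
        unfolding X1_def X_def by auto
      define s where "s = (if last \<pi> = {a} then a else -a)"
      have L2: "last \<pi> = {s}" "s \<in> S" using L s_def S_def by auto
      have "SSP' (T - {\<bar>s\<bar>}) j (butlast \<pi>)" using SSP'_butlast[OF H L2(1)] .
      then have "butlast \<pi> \<in> Y1" using Sabs[OF L2(2)] unfolding Y1_def T'_def by simp
      then show "y \<in> Y1 \<times> S" using p(2) L2(2) unfolding g1_def s_def by simp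
    qed
  qed
  define X2 where "X2 = X - X1"
  define f2 where "f2 = (\<lambda>(\<pi>::int set list, i::nat, s::int). \<pi>[i := \<pi>!i \<union> {s}])"
  define sel where "sel = (\<lambda>\<pi>::int set list. if a \<in> \<Union>(set \<pi>) then a else -a)"
  define idx where "idx = (\<lambda>\<pi>::int set list. LEAST i. i < Suc j \<and> sel \<pi> \<in> \<pi>!i)"
  define g2 where "g2 = (\<lambda>\<pi>::int set list. (\<pi>[idx \<pi> := \<pi>!(idx \<pi>) - {sel \<pi>}], idx \<pi>, sel \<pi>))"
  have selX: "sel \<pi> \<in> S \<and> idx \<pi> < Suc j \<and> sel \<pi> \<in> \<pi>!(idx \<pi>)" if H: "SSP' T (Suc j) \<pi>" for \<pi>
  proof -
    have len: "length \<pi> = Suc j" using SSP'_len[OF H] .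
    obtain i0 x where i0: "i0 < Suc j" "x \<in> \<pi>!i0" "\<bar>x\<bar> = a" using SSP'_cover[OF H aT] by blast
    have ex: "\<exists>i. i < Suc j \<and> sel \<pi> \<in> \<pi>!i"
    proof (cases "a \<in> \<Union>(set \<pi>)")
      case True
      then obtain i where "i < length \<pi>" "a \<in> \<pi>!i" unfolding Union_set_nth by blast
      then show ?thesis using True len unfolding sel_def by auto
    next
      case False
      then have "x \<noteq> a" using i0 len by (metis UnionI nth_mem)
      then have "x = -a" using i0(3) by (auto simp: abs_if split: if_splits)
      then show ?thesis using False i0 unfolding sel_def by auto
    qed
    have "idx \<pi> < Suc j \<and> sel \<pi> \<in> \<pi>!(idx \<pi>)" unfolding idx_def using LeastI_ex[OF ex] .
    moreover have "sel \<pi> \<in> S" unfolding sel_def S_def by auto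
    ultimately show ?thesis by simp
  qed
  have bij2: "bij_betw f2 (Y2 \<times> {..<Suc j} \<times> S) X2"
  proof (rule bij_betw_byWitness[where f' = g2])
    show "\<forall>x\<in>Y2 \<times> {..<Suc j} \<times> S. g2 (f2 x) = x"
    proof
      fix x assume "x \<in> Y2 \<times> {..<Suc j} \<times> S"
      then obtain \<pi> i s where x: "x = (\<pi>, i, s)" "SSP' T' (Suc j) \<pi>" "i < Suc j" "s \<in> S"
        unfolding Y2_def by blast
      let ?p = "\<pi>[i := \<pi>!i \<union> {s}]"
      have len: "length \<pi> = Suc j" using SSP'_len[OF x(2)] .
      have notin: "\<And>i' z. i' < Suc j \<Longrightarrow> z \<in> \<pi>!i' \<Longrightarrow> \<bar>z\<bar> < a"
        using SSP'_abs[OF x(2)] lt by blast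
      have memp: "\<And>i' z. i' < Suc j \<Longrightarrow> z \<in> ?p!i' \<longleftrightarrow> z \<in> \<pi>!i' \<or> (i' = i \<and> z = s)"
        using len x(3) by (auto simp: nth_list_update)
      have sp: "s \<in> ?p!i" using len x(3) by simp
      have sn: "s \<notin> \<pi>!i" using notin[OF x(3)] Sabs[OF x(4)] by fastforce
      have "sel ?p = s"
      proof (cases "s = a")
        case True
        then have "a \<in> \<Union>(set ?p)" using sp len x(3) by (metis UnionI length_list_update nth_mem)
        then show ?thesis using True unfolding sel_def by simp
      next
        case False
        then have sa: "s = -a" using x(4) S_def by simp
        have "a \<notin> \<Union>(set ?p)"
        proof
          assume "a \<in> \<Union>(set ?p)"
          then obtain i' where i': "i' < Suc j" "a \<in> ?p!i'" unfolding Union_set_nth using len by auto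
          then have "a \<in> \<pi>!i' \<or> a = s" using memp by blast
          then show False
          proof
            assume "a \<in> \<pi>!i'"
            then have "\<bar>a\<bar> < a" by (rule notin[OF i'(1)])
            then show False using aa by simp
          next
            assume "a = s" then show False using sa a0 by simp
          qed
        qed
        then show ?thesis using sa unfolding sel_def by simp
      qed
      moreover have "idx ?p = i"
      proof -
        have "(LEAST i'. i' < Suc j \<and> s \<in> ?p!i') = i"
        proof (rule Least_equality)
          show "i < Suc j \<and> s \<in> ?p!i" using x(3) sp by simp
          fix y assume y: "y < Suc j \<and> s \<in> ?p!y"
          then have "y = i" using memp sn notin Sabs[OF x(4)] by fastforce
          then show "i \<le> y" by simp
        qed
        then show ?thesis unfolding idx_def using \<open>sel ?p = s\<close> by simp
      qed
      moreover have "?p[i := ?p!i - {s}] = \<pi>"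
      proof -
        have "?p!i - {s} = \<pi>!i" using sn len x(3) by auto
        then show ?thesis by simp
      qed
      ultimately show "g2 (f2 x) = x" unfolding g2_def f2_def x by simp
    qed
    show "\<forall>\<pi>\<in>X2. f2 (g2 \<pi>) = \<pi>"
    proof
      fix \<pi> assume "\<pi> \<in> X2"
      then have H: "SSP' T (Suc j) \<pi>" unfolding X2_def X_def by simp
      have len: "length \<pi> = Suc j" using SSP'_len[OF H] .
      have sx: "idx \<pi> < Suc j" "sel \<pi> \<in> \<pi>!(idx \<pi>)" using selX[OF H] by auto
      have "f2 (g2 \<pi>) = \<pi>[idx \<pi> := (\<pi>!(idx \<pi>) - {sel \<pi>}) \<union> {sel \<pi>}]"
        unfolding f2_def g2_def using sx len by simp
      also have "(\<pi>!(idx \<pi>) - {sel \<pi>}) \<union> {sel \<pi>} = \<pi>!(idx \<pi>)" using sx by auto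
      finally show "f2 (g2 \<pi>) = \<pi>" by simp
    qed
    show "f2 ` (Y2 \<times> {..<Suc j} \<times> S) \<subseteq> X2"
    proof
      fix y assume "y \<in> f2 ` (Y2 \<times> {..<Suc j} \<times> S)"
      then obtain \<pi> i s where y: "y = \<pi>[i := \<pi>!i \<union> {s}]" "SSP' T' (Suc j) \<pi>" "i < Suc j" "s \<in> S"
        unfolding f2_def Y2_def by auto
      have len: "length \<pi> = Suc j" using SSP'_len[OF y(2)] .
      have "SSP' (insert \<bar>s\<bar> T') (Suc j) y"
        using SSP'_update[where s = s, OF y(2) fT' _ y(3)] lt Sabs[OF y(4)] y(1) by simp
      then have yX: "y \<in> X" using TT Sabs[OF y(4)] unfolding X_def by simp
      obtain z where z: "z \<in> \<pi>!j" using SSP'_ne[OF y(2), of j] by auto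
      have za: "\<bar>z\<bar> < a" using SSP'_abs[OF y(2) _ z] lt by simp
      have "z \<in> y!j" using z y(1) len by (cases "i = j") (auto simp: nth_list_update)
      moreover have "last y = y!j"
      proof -
        have ly: "length y = Suc j" using y(1) len by simp
        then show ?thesis by (metis diff_Suc_1 last_conv_nth list.size(3) nat.distinct(1))
      qed
      ultimately have "z \<in> last y" by simp
      then have "\<not> (last y = {a} \<or> last y = {-a})" using za aa by auto
      then show "y \<in> X2" using yX unfolding X2_def X1_def by simp
    qed
    show "g2 ` X2 \<subseteq> Y2 \<times> {..<Suc j} \<times> S"
    proof
      fix y assume "y \<in> g2 ` X2"
      then obtain \<pi> where p: "\<pi> \<in> X2" "y = g2 \<pi>" by blast
      then have H: "SSP' T (Suc j) \<pi>" and nX1: "\<not> (last \<pi> = {a} \<or> last \<pi> = {-a})"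
        unfolding X2_def X1_def X_def by auto
      have len: "length \<pi> = Suc j" using SSP'_len[OF H] .
      have sx: "sel \<pi> \<in> S" "idx \<pi> < Suc j" "sel \<pi> \<in> \<pi>!(idx \<pi>)" using selX[OF H] by auto
      have le: "\<forall>y\<in>T. y \<le> \<bar>sel \<pi>\<bar>" using ale Sabs[OF sx(1)] by simp
      have ns: "\<pi>!(idx \<pi>) \<noteq> {sel \<pi>}"
      proof
        assume e: "\<pi>!(idx \<pi>) = {sel \<pi>}"
        then have "idx \<pi> = Suc j - 1" using SSP'_single_last[OF H fT sx(2) e le] by simp
        then have "last \<pi> = {sel \<pi>}" using e len by (metis diff_Suc_1 last_conv_nth list.size(3) nat.distinct(1))
        then show False using nX1 sx(1) S_def by auto
      qed
      have "SSP' (T - {\<bar>sel \<pi>\<bar>}) (Suc j) (\<pi>[idx \<pi> := \<pi>!(idx \<pi>) - {sel \<pi>}])"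
        using SSP'_remove[OF H fT sx(2) sx(3) ns le] .
      then show "y \<in> Y2 \<times> {..<Suc j} \<times> S"
        using p(2) sx Sabs[OF sx(1)] unfolding g2_def Y2_def T'_def by simp
    qed
  qed
  have aneg: "a \<noteq> -a" using a0 by simp
  have wpow: "w \<pi>' = w \<pi> * q ^ e" if "mstat \<pi>' = mstat \<pi> + int e" for \<pi>' \<pi> e
    unfolding w_def that using q0 by (simp add: power_int_add)
  have sum1: "(\<Sum>s\<in>S. w (\<pi> @ [{s}])) = w \<pi> * (q^(2*j+1)*(1+q))" if "\<pi> \<in> Y1" for \<pi>
  proof -
    have H: "SSP' T' j \<pi>" using that Y1_def by simp
    have fb: "\<forall>B\<in>set \<pi>. finite B" using SSP'_blocks_fin[OF fT' H] .
    have len: "length \<pi> = j" using SSP'_len[OF H] .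
    have m: "w (\<pi> @ [{s}]) = w \<pi> * q ^ (2 * j + (if s > 0 then 1 else 2))" if "s \<in> S" for s
    proof -
      have "s \<notin> \<Union>(set \<pi>)" using SSP'_notin[OF H] Sabs[OF that] aT' by simp
      then show ?thesis using wpow mstat_append[OF fb] len by simp
    qed
    have "(\<Sum>s\<in>S. w (\<pi> @ [{s}])) = w (\<pi> @ [{a}]) + w (\<pi> @ [{-a}])"
      unfolding S_def using aneg by simp
    also have "\<dots> = w \<pi> * q ^ (2 * j + 1) + w \<pi> * q ^ (2 * j + 2)"
      using m[of a] m[of "-a"] a0 S_def by simp
    finally show ?thesis by (simp add: algebra_simps power_add)
  qed
  have sum2: "(\<Sum>i<Suc j. \<Sum>s\<in>S. w (\<pi>[i := \<pi>!i \<union> {s}])) = w \<pi> * (q * qint q (2 * Suc j))"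
    if "\<pi> \<in> Y2" for \<pi>
  proof -
    have H: "SSP' T' (Suc j) \<pi>" using that Y2_def by simp
    have fb: "\<forall>B\<in>set \<pi>. finite B" using SSP'_blocks_fin[OF fT' H] .
    have len: "length \<pi> = Suc j" using SSP'_len[OF H] .
    have m: "w (\<pi>[i := \<pi>!i \<union> {s}]) = w \<pi> * q ^ (2 * i + (if s > 0 then 1 else 2))"
      if "s \<in> S" "i < Suc j" for s i
    proof -
      have "s \<notin> \<Union>(set \<pi>)" using SSP'_notin[OF H] Sabs[OF that(1)] aT' by simp
      then show ?thesis using wpow mstat_update[OF _ fb] len that(2) by simp
    qed
    have "(\<Sum>i<Suc j. \<Sum>s\<in>S. w (\<pi>[i := \<pi>!i \<union> {s}]))
        = (\<Sum>i<Suc j. w \<pi> * (q^(2*i+1)*(1+q)))"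
    proof (rule sum.cong)
      fix i assume i: "i \<in> {..<Suc j}"
      have "(\<Sum>s\<in>S. w (\<pi>[i := \<pi>!i \<union> {s}])) = w (\<pi>[i := \<pi>!i \<union> {a}]) + w (\<pi>[i := \<pi>!i \<union> {-a}])"
        unfolding S_def using aneg by simp
      also have "\<dots> = w \<pi> * q ^ (2 * i + 1) + w \<pi> * q ^ (2 * i + 2)"
        using m[of a i] m[of "-a" i] a0 S_def i by simp
      finally show "(\<Sum>s\<in>S. w (\<pi>[i := \<pi>!i \<union> {s}])) = w \<pi> * (q^(2*i+1)*(1+q))"
        by (simp add: algebra_simps power_add)
    qed simp
    also have "\<dots> = w \<pi> * (q * qint q (2 * Suc j))"
      by (simp only: qint_even sum_distrib_left)
    finally show ?thesis .
  qed
  have "W q T (Suc j) = sum w X" unfolding W_def w_def X_def by simp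
  also have "\<dots> = sum w X2 + sum w X1" unfolding X2_def by (rule sum.subset_diff[OF X1X fX])
  also have "sum w X1 = (\<Sum>x\<in>Y1 \<times> S. w (f1 x))" by (rule sum.reindex_bij_betw[OF bij1, symmetric])
  also have "\<dots> = (\<Sum>\<pi>\<in>Y1. \<Sum>s\<in>S. w (\<pi> @ [{s}]))"
    unfolding f1_def by (simp add: sum.cartesian_product split_def)
  also have "\<dots> = (\<Sum>\<pi>\<in>Y1. w \<pi> * (q^(2*j+1)*(1+q)))" by (rule sum.cong) (simp_all add: sum1)
  also have "sum w X2 = (\<Sum>x\<in>Y2 \<times> {..<Suc j} \<times> S. w (f2 x))" by (rule sum.reindex_bij_betw[OF bij2, symmetric])
  also have "\<dots> = (\<Sum>\<pi>\<in>Y2. \<Sum>i<Suc j. \<Sum>s\<in>S. w (\<pi>[i := \<pi>!i \<union> {s}]))"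
    unfolding f2_def by (simp add: sum.cartesian_product split_def)
  also have "\<dots> = (\<Sum>\<pi>\<in>Y2. w \<pi> * (q * qint q (2 * Suc j)))" by (rule sum.cong[OF refl]) (rule sum2)
  finally have "W q T (Suc j) = (\<Sum>\<pi>\<in>Y2. w \<pi>) * (q * qint q (2 * Suc j)) + (\<Sum>\<pi>\<in>Y1. w \<pi>) * (q^(2*j+1)*(1+q))"
    by (simp add: sum_distrib_right)
  moreover have "(\<Sum>\<pi>\<in>Y1. w \<pi>) = W q (T - {Max T}) j" unfolding W_def Y1_def T'_def a_def w_def ..
  moreover have "(\<Sum>\<pi>\<in>Y2. w \<pi>) = W q (T - {Max T}) (Suc j)" unfolding W_def Y2_def T'_def a_def w_def ..
  ultimately show ?thesis by (simp add: algebra_simps)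
qed

fun sB :: "complex \<Rightarrow> nat \<Rightarrow> nat \<Rightarrow> complex" where
  "sB q 0 k = (if k = 0 then 1 else 0)"
| "sB q (Suc r) 0 = 0"
| "sB q (Suc r) (Suc k) = sB q r k + q * qint q (2 * Suc k) * sB q r (Suc k)"

definition Nrm :: "complex \<Rightarrow> nat \<Rightarrow> complex" where
  "Nrm q k = q ^ (k^2) * (qint q 2) ^ k"

lemma qint2: "qint q 2 = 1 + q" by (simp add: qint_def numeral_2_eq_2)

lemma W_empty: "W q {} k = (if k = 0 then 1 else 0)"
proof (cases k)
  case 0
  have "{\<pi>. SSP' {} 0 \<pi>} = {[]}" unfolding SSP'_def by auto
  then show ?thesis using 0 unfolding W_def by (simp add: mstat_def pos_def)
next
  case (Suc j)
  have e: "{\<pi>. SSP' {} k \<pi>} = {}"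
  proof -
    have "\<not> SSP' {} k \<pi>" for \<pi>
    proof
      assume H: "SSP' {} k \<pi>"
      have "0 < k" using Suc by simp
      then obtain x where "x \<in> \<pi>!0" using SSP'_ne[OF H] by blast
      then show False using SSP'_abs[OF H \<open>0 < k\<close>] by blast
    qed
    then show ?thesis by blast
  qed
  show ?thesis using Suc unfolding W_def e by simp
qed

lemma W_zero: "T \<noteq> {} \<Longrightarrow> W q T 0 = 0"
proof -
  assume "T \<noteq> {}"
  then have e: "{\<pi>. SSP' T 0 \<pi>} = {}" using SSP'_U by fastforce
  show ?thesis unfolding W_def e by simp
qed

lemma W_formula:
  assumes "finite T" "T \<subseteq> {0<..}" "q \<noteq> 0"
  shows "W q T k = Nrm q k * sB q (card T) k"
proof -
  have "\<forall>T k. card T = r \<and> finite T \<and> T \<subseteq> {0<..} \<longrightarrow> W q T k = Nrm q k * sB q (card T) k" for r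
  proof (induction r)
    case 0
    show ?case
    proof (intro allI impI)
      fix T :: "int set" and k assume "card T = 0 \<and> finite T \<and> T \<subseteq> {0<..}"
      then have "T = {}" by auto
      then show "W q T k = Nrm q k * sB q (card T) k" by (simp add: W_empty Nrm_def)
    qed
  next
    case (Suc r)
    show ?case
    proof (intro allI impI)
      fix T :: "int set" and k assume H: "card T = Suc r \<and> finite T \<and> T \<subseteq> {0<..}"
      then have fT: "finite T" and Tp: "T \<subseteq> {0<..}" and ne: "T \<noteq> {}" by auto
      let ?T' = "T - {Max T}"
      have cT': "card ?T' = r" using H ne by simp
      have fT': "finite ?T'" and Tp': "?T' \<subseteq> {0<..}" using fT Tp by auto
      have IH: "\<And>k. W q ?T' k = Nrm q k * sB q r k" using Suc.IH cT' fT' Tp' by blast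
      show "W q T k = Nrm q k * sB q (card T) k"
      proof (cases k)
        case 0 then show ?thesis using W_zero[OF ne] H by simp
      next
        case (Suc j)
        have N: "Nrm q (Suc j) = q^(2*j+1)*(1+q) * Nrm q j"
        proof -
          have e: "Suc j ^ 2 = j^2 + (2*j+1)" by (simp add: power2_eq_square)
          show ?thesis unfolding Nrm_def qint2 e power_add by (simp add: algebra_simps)
        qed
        have "W q T k = q^(2*j+1)*(1+q) * W q ?T' j + q * qint q (2 * Suc j) * W q ?T' (Suc j)"
          using W_rec[OF fT Tp ne assms(3)] Suc by simp
        also have "\<dots> = Nrm q (Suc j) * (sB q r j + q * qint q (2 * Suc j) * sB q r (Suc j))"
          unfolding IH N by (simp add: algebra_simps)
        finally show ?thesis using Suc H by simp
      qed
    qed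
  qed
  then show ?thesis using assms by blast
qed

definition SBn :: "complex \<Rightarrow> nat \<Rightarrow> nat \<Rightarrow> complex" where
  "SBn q n k = (\<Sum>T\<in>Pow {1..int n}. sB q (card T) k)"

lemma Dsub_eq: "Dsub n k = (\<Union>T\<in>Pow {1..int n} - (\<lambda>i. {1..int n} - {i}) ` {1..int n}. {\<pi>. SSP' T k \<pi>})"
proof -
  let ?P = "Pow {1..int n}" and ?R = "(\<lambda>i. {1..int n} - {i}) ` {1..int n}"
  have pos: "\<And>T. T \<in> ?P \<Longrightarrow> T \<subseteq> {0<..}" by auto
  have B: "Bsub n k = (\<Union>T\<in>?P. {\<pi>. SSP' T k \<pi>})"
  proof (rule set_eqI)
    fix \<pi>
    show "\<pi> \<in> Bsub n k \<longleftrightarrow> \<pi> \<in> (\<Union>T\<in>?P. {\<pi>. SSP' T k \<pi>})"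
    proof
      assume "\<pi> \<in> Bsub n k"
      then obtain T where T: "T \<subseteq> {1..int n}" "SSP T k \<pi>" unfolding Bsub_def by blast
      have Tp: "T \<subseteq> {0<..}" using T(1) by auto
      then have "SSP' T k \<pi>" using SSP_iff[OF Tp] T(2) by simp
      then show "\<pi> \<in> (\<Union>T\<in>?P. {\<pi>. SSP' T k \<pi>})" using T(1) by blast
    next
      assume "\<pi> \<in> (\<Union>T\<in>?P. {\<pi>. SSP' T k \<pi>})"
      then obtain T where T: "T \<subseteq> {1..int n}" "SSP' T k \<pi>" by blast
      have Tp: "T \<subseteq> {0<..}" using T(1) by auto
      then have "SSP T k \<pi>" using SSP_iff[OF Tp] T(2) by simp
      then show "\<pi> \<in> Bsub n k" using T(1) unfolding Bsub_def by blast
    qed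
  qed
  have C: "(\<Union>i\<in>{1..int n}. Bset ({1..int n} - {i}) k) = (\<Union>T\<in>?R. {\<pi>. SSP' T k \<pi>})"
  proof -
    have "\<And>i. Bset ({1..int n} - {i}) k = {\<pi>. SSP' ({1..int n} - {i}) k \<pi>}"
    proof -
      fix i
      have sub: "{1..int n} - {i} \<subseteq> {0<..}" by auto
      then show "Bset ({1..int n} - {i}) k = {\<pi>. SSP' ({1..int n} - {i}) k \<pi>}"
        unfolding Bset_def using SSP_iff[OF sub] by auto
    qed
    then have "(\<Union>i\<in>{1..int n}. Bset ({1..int n} - {i}) k) = (\<Union>i\<in>{1..int n}. {\<pi>. SSP' ({1..int n} - {i}) k \<pi>})"
      by simp
    then show ?thesis by (simp only: image_image)
  qed
  show ?thesis
  proof (rule equalityI)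
    show "Dsub n k \<subseteq> (\<Union>T\<in>?P - ?R. {\<pi>. SSP' T k \<pi>})"
    proof
      fix \<pi> assume D: "\<pi> \<in> Dsub n k"
      then have "\<pi> \<in> Bsub n k" unfolding Dsub_def by simp
      then obtain T where T: "T \<in> ?P" "SSP' T k \<pi>" unfolding B by blast
      have "\<pi> \<notin> (\<Union>i\<in>{1..int n}. Bset ({1..int n} - {i}) k)" using D unfolding Dsub_def by simp
      then have "\<pi> \<notin> (\<Union>T\<in>?R. {\<pi>. SSP' T k \<pi>})" unfolding C .
      then have "T \<notin> ?R" using T(2) by blast
      then show "\<pi> \<in> (\<Union>T\<in>?P - ?R. {\<pi>. SSP' T k \<pi>})" using T by blast
    qed
    show "(\<Union>T\<in>?P - ?R. {\<pi>. SSP' T k \<pi>}) \<subseteq> Dsub n k"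
    proof
      fix \<pi> assume "\<pi> \<in> (\<Union>T\<in>?P - ?R. {\<pi>. SSP' T k \<pi>})"
      then obtain T where T: "T \<in> ?P" "T \<notin> ?R" "SSP' T k \<pi>" by blast
      have "\<pi> \<notin> (\<Union>T\<in>?R. {\<pi>. SSP' T k \<pi>})"
      proof
        assume "\<pi> \<in> (\<Union>T\<in>?R. {\<pi>. SSP' T k \<pi>})"
        then obtain T' where "T' \<in> ?R" "SSP' T' k \<pi>" by blast
        then have "T' = T" using SSP'_unique T(3) by blast
        then show False using T(2) \<open>T' \<in> ?R\<close> by simp
      qed
      moreover have "\<pi> \<in> Bsub n k" unfolding B using T by blast
      ultimately show "\<pi> \<in> Dsub n k" unfolding Dsub_def C by blast
    qed
  qed
qed

lemma sum_Dsub: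
  assumes q0: "q \<noteq> 0"
  shows "(\<Sum>\<pi>\<in>Dsub n k. q powi mstat \<pi>) = Nrm q k * (SBn q n k - of_nat n * sB q (n - 1) k)"
proof -
  let ?P = "Pow {1..int n}" and ?R = "(\<lambda>i. {1..int n} - {i}) ` {1..int n}"
  have fP: "finite ?P" by simp
  have RP: "?R \<subseteq> ?P" by auto
  have "(\<Sum>\<pi>\<in>Dsub n k. q powi mstat \<pi>) = (\<Sum>T\<in>?P - ?R. \<Sum>\<pi>\<in>{\<pi>. SSP' T k \<pi>}. q powi mstat \<pi>)"
    unfolding Dsub_eq
  proof (rule sum.UNION_disjoint)
    show "finite (?P - ?R)" using fP by simp
    show "\<forall>T\<in>?P - ?R. finite {\<pi>. SSP' T k \<pi>}"
      using finite_SSP' by (metis DiffD1 PowD finite_atLeastAtMost_int finite_subset)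
    show "\<forall>T\<in>?P - ?R. \<forall>T'\<in>?P - ?R. T \<noteq> T' \<longrightarrow> {\<pi>. SSP' T k \<pi>} \<inter> {\<pi>. SSP' T' k \<pi>} = {}"
      using SSP'_unique by blast
  qed
  also have "\<dots> = (\<Sum>T\<in>?P - ?R. Nrm q k * sB q (card T) k)"
  proof (rule sum.cong[OF refl])
    fix T assume "T \<in> ?P - ?R"
    then have "finite T" "T \<subseteq> {0<..}" by (auto intro: finite_subset)
    then show "(\<Sum>\<pi>\<in>{\<pi>. SSP' T k \<pi>}. q powi mstat \<pi>) = Nrm q k * sB q (card T) k"
      using W_formula[OF _ _ q0] unfolding W_def by blast
  qed
  also have "\<dots> = Nrm q k * (\<Sum>T\<in>?P - ?R. sB q (card T) k)" by (simp add: sum_distrib_left)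
  also have "(\<Sum>T\<in>?P - ?R. sB q (card T) k) = SBn q n k - (\<Sum>T\<in>?R. sB q (card T) k)"
    unfolding SBn_def using sum_diff[OF fP RP] .
  also have "(\<Sum>T\<in>?R. sB q (card T) k) = (\<Sum>i\<in>{1..int n}. sB q (card ({1..int n} - {i})) k)"
  proof (rule sum.reindex[unfolded comp_def])
    show "inj_on (\<lambda>i. {1..int n} - {i}) {1..int n}"
      unfolding inj_on_def by blast
  qed
  also have "\<dots> = (\<Sum>i\<in>{1..int n}. sB q (n - 1) k)"
    by (rule sum.cong) auto
  also have "\<dots> = of_nat n * sB q (n - 1) k" by simp
  finally show ?thesis .
qed

lemma SD_eq:
  assumes "q \<noteq> 0" "qint q 2 \<noteq> 0"
  shows "SD q n k = SBn q n k - of_nat n * sB q (n - 1) k"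
proof -
  have N: "Nrm q k \<noteq> 0" unfolding Nrm_def using assms by simp
  show ?thesis unfolding SD_def sum_Dsub[OF assms(1)] using N unfolding Nrm_def by simp
qed

definition fB :: "complex \<Rightarrow> complex \<Rightarrow> nat \<Rightarrow> complex" where
  "fB q t k = (\<Prod>i=1..k. t - qint q (2*i - 1))"

lemma fB_0[simp]: "fB q t 0 = 1" by (simp add: fB_def)
lemma fB_Suc: "fB q t (Suc k) = fB q t k * (t - qint q (2*k + 1))"
  by (simp add: fB_def prod.cl_ivl_Suc)

lemma qint_0[simp]: "qint q 0 = 0" by (simp add: qint_def)
lemma qint_Suc_shift: "qint q (Suc m) = 1 + q * qint q m"
  unfolding qint_def by (subst sum.lessThan_Suc_shift) (simp add: sum_distrib_left)
lemma qint_add: "qint q (a + b) = qint q a + q^a * qint q b"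
  by (induction b) (simp_all add: qint_def algebra_simps power_add)

lemma sB_zero: "r < k \<Longrightarrow> sB q r k = 0"
proof (induction r arbitrary: k)
  case 0 then show ?case by simp
next
  case (Suc r)
  then obtain k' where "k = Suc k'" by (cases k) auto
  then show ?case using Suc by simp
qed

lemma sB_diag: "sB q r r = 1"
  by (induction r) (simp_all add: sB_zero)

lemma sB_expand: "(\<Sum>k\<le>r. sB q r k * fB q t k) = (t - 1) ^ r"
proof (induction r)
  case 0 then show ?case by simp
next
  case (Suc r)
  have "(\<Sum>k\<le>Suc r. sB q (Suc r) k * fB q t k) = (\<Sum>k\<le>r. sB q (Suc r) (Suc k) * fB q t (Suc k))"
    by (subst sum.atMost_Suc_shift) (simp del: sum.atMost_Suc)
  also have "\<dots> = (\<Sum>k\<le>r. sB q r k * fB q t (Suc k)) + (\<Sum>k\<le>r. q * qint q (2 * Suc k) * sB q r (Suc k) * fB q t (Suc k))"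
    by (simp add: sum.distrib algebra_simps)
  also have "(\<Sum>k\<le>r. q * qint q (2 * Suc k) * sB q r (Suc k) * fB q t (Suc k))
      = (\<Sum>k\<le>Suc r. q * qint q (2 * k) * sB q r k * fB q t k)"
    by (subst sum.atMost_Suc_shift) (simp del: sum.atMost_Suc)
  also have "\<dots> = (\<Sum>k\<le>r. q * qint q (2 * k) * sB q r k * fB q t k)"
    by (simp add: sB_zero)
  also have "(\<Sum>k\<le>r. sB q r k * fB q t (Suc k)) + (\<Sum>k\<le>r. q * qint q (2 * k) * sB q r k * fB q t k)
      = (\<Sum>k\<le>r. (t - 1) * (sB q r k * fB q t k))"
    unfolding sum.distrib[symmetric]
  proof (rule sum.cong[OF refl])
    fix k
    have "qint q (2*k+1) = 1 + q * qint q (2*k)" using qint_Suc_shift[of q "2*k"] by simp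
    then show "sB q r k * fB q t (Suc k) + q * qint q (2 * k) * sB q r k * fB q t k = (t - 1) * (sB q r k * fB q t k)"
      unfolding fB_Suc by (simp add: algebra_simps)
  qed
  also have "\<dots> = (t - 1) ^ Suc r" using Suc by (simp add: sum_distrib_left[symmetric])
  finally show ?case .
qed

lemma sB_expand_le: "r \<le> N \<Longrightarrow> (\<Sum>k\<le>N. sB q r k * fB q t k) = (t - 1) ^ r"
proof (induction N rule: dec_induct)
  case base then show ?case by (rule sB_expand)
next
  case (step N) then show ?case by (simp add: sB_zero)
qed

lemma pow_subsets: "finite A \<Longrightarrow> (\<Sum>T\<in>Pow A. (x::complex) ^ card T) = (x + 1) ^ card A"
proof -
  assume fA: "finite A"
  have "(\<Prod>a\<in>A. x + 1) = (\<Sum>X\<in>Pow A. (\<Prod>a\<in>X. x) * (\<Prod>a\<in>A-X. 1))"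
    by (rule prod_add[OF fA])
  then show ?thesis by simp
qed

lemma SBn_expand: "(\<Sum>k\<le>n. SBn q n k * fB q t k) = t ^ n"
proof -
  let ?P = "Pow {1..int n}"
  have "(\<Sum>k\<le>n. SBn q n k * fB q t k) = (\<Sum>T\<in>?P. \<Sum>k\<le>n. sB q (card T) k * fB q t k)"
    unfolding SBn_def sum_distrib_right by (rule sum.swap)
  also have "\<dots> = (\<Sum>T\<in>?P. (t - 1) ^ card T)"
  proof (rule sum.cong[OF refl])
    fix T assume "T \<in> ?P"
    then have "card T \<le> card {1..int n}" by (intro card_mono) auto
    then have "card T \<le> n" by simp
    then show "(\<Sum>k\<le>n. sB q (card T) k * fB q t k) = (t - 1) ^ card T" by (rule sB_expand_le)
  qed
  also have "\<dots> = t ^ n" using pow_subsets[of "{1..int n}" "t - 1"] by simp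
  finally show ?thesis .
qed

lemma SBn_diag: "SBn q n n = 1"
proof -
  let ?P = "Pow {1..int n}"
  have "SBn q n n = sB q (card {1..int n}) n + (\<Sum>T\<in>?P - {{1..int n}}. sB q (card T) n)"
    unfolding SBn_def by (rule sum.remove) auto
  also have "(\<Sum>T\<in>?P - {{1..int n}}. sB q (card T) n) = 0"
  proof (rule sum.neutral, rule ballI)
    fix T assume "T \<in> ?P - {{1..int n}}"
    then have "T \<subset> {1..int n}" by auto
    then have "card T < card {1..int n}" by (intro psubset_card_mono) auto
    then show "sB q (card T) n = 0" by (simp add: sB_zero)
  qed
  finally show ?thesis by (simp add: sB_diag)
qed

lemma qfallD_lt: "k < n \<Longrightarrow> qfallD n q t k = fB q t k"
  unfolding qfallD_def fB_def by simp

lemma qfallD_n: "qfallD (Suc m) q t (Suc m) = fB q t m * (t - qint q m)"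
  unfolding qfallD_def fB_def by simp

theorem proposition3p4:
  fixes n :: nat and t q :: complex
  assumes "q \<noteq> 0" and "qint q 2 \<noteq> 0"
  shows "t ^ n = (\<Sum>k=0..n. SD q n k * qfallD n q t k)
                 + of_nat n * (t - 1) ^ (n - 1)
                 - qint q n * q ^ (n - 1) * qfallD n q t (n - 1)"
proof (cases n)
  case 0
  have "SD q 0 0 = 1" unfolding SD_eq[OF assms] SBn_def by simp
  then show ?thesis using 0 by (simp add: qfallD_def)
next
  case (Suc m)
  have SDe: "\<And>k. SD q n k = SBn q n k - of_nat n * sB q m k" using SD_eq[OF assms] Suc by simp
  have "(\<Sum>k=0..n. SD q n k * qfallD n q t k)
      = (\<Sum>k\<le>n. SBn q n k * qfallD n q t k) - of_nat n * (\<Sum>k\<le>n. sB q m k * qfallD n q t k)"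
    unfolding SDe atLeast0AtMost by (simp add: sum_subtractf sum_distrib_left algebra_simps)
  also have "(\<Sum>k\<le>n. SBn q n k * qfallD n q t k) = (\<Sum>k\<le>m. SBn q n k * fB q t k) + fB q t m * (t - qint q m)"
    using Suc by (simp add: qfallD_lt qfallD_n SBn_diag)
  also have "(\<Sum>k\<le>m. SBn q n k * fB q t k) = t ^ n - fB q t m * (t - qint q (2*m+1))"
  proof -
    have E: "(\<Sum>k\<le>m. SBn q n k * fB q t k) + fB q t m * (t - qint q (2*m+1)) = t ^ n"
      using SBn_expand[of q n t] Suc by (simp add: SBn_diag fB_Suc)
    then show ?thesis by (simp add: eq_diff_eq)
  qed
  also have "(\<Sum>k\<le>n. sB q m k * qfallD n q t k) = (t - 1) ^ m"
    using Suc sB_expand[of q m t] by (simp add: qfallD_lt sB_zero)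
  finally have L: "(\<Sum>k=0..n. SD q n k * qfallD n q t k)
      = t ^ n - fB q t m * (t - qint q (2*m+1)) + fB q t m * (t - qint q m) - of_nat n * (t - 1) ^ m" .
  have qi: "qint q (2*m+1) = qint q m + q^m * qint q (Suc m)"
    using qint_add[of q m "Suc m"] by (simp add: mult_2)
  have "qfallD n q t (n - 1) = fB q t m" using Suc by (simp add: qfallD_lt)
  then show ?thesis unfolding L using Suc qi by (simp add: algebra_simps)
qed


end
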